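(* Let $\mathcal{F}$ be a monotone family of graphs (closed under taking subgraphs) and let $C\ge 1$. Suppose there is a strategy $A$ for the $k$-CTP whose competitive ratio is at most $C$ on every road map $(G,E_* )$ with $|E_*|\le k$ such that $G\in\mathcal{F}$ and $G$ has no articulation point. Then there is a strategy $A'$ whose competitive ratio is at most $C$ on every road map $(G,E_* )$ with $|E_*|\le k$ and $G\in\mathcal{F}$.
   Context: The $k$-Canadian Traveller Problem ($k$-CTP): we are given an undirected connected graph $G=(V,E,\omega)$ with weights $\omega:E\to\mathbb{Q}^+$, a source $s\in V$ and a target $t\in V$, and a hidden set $E_*\subsetneq E$ of blocked edges with $|E_*|\le k$. The pair $(G,E_* )$ is a road map if $s$ and $t$ are connected in $G\setminus E_*$; only road maps are considered. A traveller starts at $s$ and must reach $t$. Initially $E_*$ is unknown; the traveller learns whether an edge is blocked exactly when he visits one of its endpoints. A (deterministic) strategy is an online algorithm which, given $G$, $\omega$, $s$, $t$, $k$, the sequence of vertices visited so far and the set of blocked edges revealed so far, chooses the next vertex, a neighbour of the current vertex through an edge not known to be blocked. The cost of the resulting $(s,t)$-walk is the sum of the weights of the traversed edges (with multiplicity). The competitive ratio of $A$ on $(G,E_* )$ is this cost divided by $d_{E_*}(s,t)$, the length of a shortest $(s,t)$-path in $G\setminus E_*$. A vertex $v$ is an articulation point of a connected graph $G$ if $G\setminus\{v\}$ is disconnected. *)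

theory Defs
  imports Complex_Main
begin

text \<open>A graph is a pair (V, E) of a vertex set and a set of edges, each edge being a
  two-element subset of V (undirected, simple).\<close>
type_synonym 'v graph = "'v set \<times> 'v set set"

text \<open>A deterministic online strategy for the k-CTP: given the graph, the weights, s, t, k,
  the sequence of vertices visited so far and the set of blocked edges revealed so far,
  it returns the next vertex.\<close>
type_synonym 'v strategy =
  "'v graph \<Rightarrow> ('v set \<Rightarrow> rat) \<Rightarrow> 'v \<Rightarrow> 'v \<Rightarrow> nat \<Rightarrow> 'v list \<Rightarrow> 'v set set \<Rightarrow> 'v"

definition wf_graph :: "'v graph \<Rightarrow> bool" where
  "wf_graph G \<longleftrightarrow> finite (fst G) \<and>
     (\<forall>e\<in>snd G. \<exists>u v. u \<noteq> v \<and> u \<in> fst G \<and> v \<in> fst G \<and> e = {u, v})"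

definition is_walk :: "'v set \<Rightarrow> 'v set set \<Rightarrow> 'v list \<Rightarrow> bool" where
  "is_walk V E p \<longleftrightarrow> p \<noteq> [] \<and> set p \<subseteq> V \<and>
     (\<forall>i. Suc i < length p \<longrightarrow> {p ! i, p ! Suc i} \<in> E)"

definition walk_cost :: "('v set \<Rightarrow> rat) \<Rightarrow> 'v list \<Rightarrow> rat" where
  "walk_cost \<omega> p = (\<Sum>i < length p - 1. \<omega> {p ! i, p ! Suc i})"

definition connected_in :: "'v set \<Rightarrow> 'v set set \<Rightarrow> 'v \<Rightarrow> 'v \<Rightarrow> bool" where
  "connected_in V E u v \<longleftrightarrow> (\<exists>p. is_walk V E p \<and> hd p = u \<and> last p = v)"

definition connected_graph :: "'v graph \<Rightarrow> bool" where
  "connected_graph G \<longleftrightarrow> (\<forall>u\<in>fst G. \<forall>v\<in>fst G. connected_in (fst G) (snd G) u v)"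

definition articulation_point :: "'v graph \<Rightarrow> 'v \<Rightarrow> bool" where
  "articulation_point G v \<longleftrightarrow> v \<in> fst G \<and>
     \<not> connected_graph (fst G - {v}, {e \<in> snd G. v \<notin> e})"

definition shortest_dist :: "'v set \<Rightarrow> 'v set set \<Rightarrow> ('v set \<Rightarrow> rat) \<Rightarrow> 'v \<Rightarrow> 'v \<Rightarrow> rat" where
  "shortest_dist V E \<omega> s t =
     Min (walk_cost \<omega> ` {p. is_walk V E p \<and> distinct p \<and> hd p = s \<and> last p = t})"

definition revealed :: "'v set set \<Rightarrow> 'v list \<Rightarrow> 'v set set" where
  "revealed Eb p = {e \<in> Eb. \<exists>v\<in>set p. v \<in> e}"

primrec traj :: "'v strategy \<Rightarrow> 'v graph \<Rightarrow> ('v set \<Rightarrow> rat) \<Rightarrow> 'v \<Rightarrow> 'v \<Rightarrow> nat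
    \<Rightarrow> 'v set set \<Rightarrow> nat \<Rightarrow> 'v list" where
  "traj A G \<omega> s t k Eb 0 = [s]"
| "traj A G \<omega> s t k Eb (Suc n) =
     (let p = traj A G \<omega> s t k Eb n in
      if last p = t then p else p @ [A G \<omega> s t k p (revealed Eb p)])"

definition ctp_instance :: "'v graph \<Rightarrow> ('v set \<Rightarrow> rat) \<Rightarrow> 'v \<Rightarrow> 'v \<Rightarrow> nat \<Rightarrow> 'v set set \<Rightarrow> bool" where
  "ctp_instance G \<omega> s t k Eb \<longleftrightarrow> wf_graph G \<and> connected_graph G \<and>
     (\<forall>e\<in>snd G. \<omega> e > 0) \<and> s \<in> fst G \<and> t \<in> fst G \<and>
     Eb \<subset> snd G \<and> card Eb \<le> k \<and> connected_in (fst G) (snd G - Eb) s t"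

definition competitive_within :: "'v strategy \<Rightarrow> 'v graph \<Rightarrow> ('v set \<Rightarrow> rat) \<Rightarrow> 'v \<Rightarrow> 'v
    \<Rightarrow> nat \<Rightarrow> 'v set set \<Rightarrow> real \<Rightarrow> bool" where
  "competitive_within A G \<omega> s t k Eb C \<longleftrightarrow>
     (\<exists>n. let p = traj A G \<omega> s t k Eb n in
        last p = t \<and> is_walk (fst G) (snd G - Eb) p \<and>
        real_of_rat (walk_cost \<omega> p) \<le> C * real_of_rat (shortest_dist (fst G) (snd G - Eb) \<omega> s t))"

definition monotone_family :: "'v graph set \<Rightarrow> bool" where
  "monotone_family F \<longleftrightarrow> (\<forall>V E V' E'. (V, E) \<in> F \<longrightarrow> V' \<subseteq> V \<longrightarrow> E' \<subseteq> E \<longrightarrow>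
     (\<forall>e\<in>E'. e \<subseteq> V') \<longrightarrow> (V', E') \<in> F)"

end

theory Submission
  imports Defs
begin


abbreviation adj :: "'v set set \<Rightarrow> 'v \<Rightarrow> 'v \<Rightarrow> bool" where
  "adj E \<equiv> (\<lambda>x y. {x,y} \<in> E)"

lemma is_walk_iff: "is_walk V E p \<longleftrightarrow> p \<noteq> [] \<and> set p \<subseteq> V \<and> successively (adj E) p"
  unfolding is_walk_def successively_conv_nth by blast

lemma is_walk_single[simp]: "is_walk V E [x] \<longleftrightarrow> x \<in> V"
  by (simp add: is_walk_iff)

lemma is_walk_Cons2[simp]: "is_walk V E (x # y # r) \<longleftrightarrow> x \<in> V \<and> {x,y} \<in> E \<and> is_walk V E (y # r)"
  by (auto simp add: is_walk_iff)

lemma walk_cost_Nil[simp]: "walk_cost \<omega> [] = 0"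
  by (simp add: walk_cost_def)

lemma walk_cost_single[simp]: "walk_cost \<omega> [x] = 0"
  by (simp add: walk_cost_def)

lemma walk_cost_Cons2[simp]: "walk_cost \<omega> (x # y # r) = \<omega> {x,y} + walk_cost \<omega> (y # r)"
  unfolding walk_cost_def by (simp add: sum.lessThan_Suc_shift del: sum.lessThan_Suc)

lemma walk_cost_append: "ys \<noteq> [] \<Longrightarrow> walk_cost \<omega> (xs @ ys) = walk_cost \<omega> (xs @ [hd ys]) + walk_cost \<omega> ys"
proof (induction xs)
  case Nil then show ?case by (cases ys) auto
next
  case (Cons a xs)
  then show ?case by (cases xs; cases ys) auto
qed

lemma walk_cost_glue: "xs \<noteq> [] \<Longrightarrow> ys \<noteq> [] \<Longrightarrow> last xs = hd ys \<Longrightarrow>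
   walk_cost \<omega> (xs @ tl ys) = walk_cost \<omega> xs + walk_cost \<omega> ys"
proof -
  assume a: "xs \<noteq> []" "ys \<noteq> []" "last xs = hd ys"
  then obtain xs' where xs: "xs = xs' @ [hd ys]" by (metis append_butlast_last_id)
  have "xs @ tl ys = xs' @ ys" using xs a(2) by simp
  then show ?thesis using walk_cost_append[OF a(2)] xs by simp
qed

lemma is_walk_glue: "is_walk V E xs \<Longrightarrow> is_walk V E ys \<Longrightarrow> last xs = hd ys \<Longrightarrow> is_walk V E (xs @ tl ys)"
proof -
  assume a: "is_walk V E xs" "is_walk V E ys" "last xs = hd ys"
  then obtain xs' where xs: "xs = xs' @ [hd ys]" by (metis append_butlast_last_id is_walk_iff)
  have ys: "ys = hd ys # tl ys" using a(2) by (simp add: is_walk_iff)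
  have "xs @ tl ys = xs' @ ys" using xs ys by (metis append.assoc append_Cons append_Nil)
  moreover have "successively (adj E) (xs' @ ys)"
    using a xs ys by (auto simp: is_walk_iff successively_append_iff)
  ultimately show ?thesis using a xs ys by (auto simp: is_walk_iff)
qed

lemma walk_cost_nonneg: "successively (adj E) p \<Longrightarrow> (\<forall>e\<in>E. \<omega> e > 0) \<Longrightarrow> walk_cost \<omega> p \<ge> 0"
proof (induction p rule: induct_list012)
  case (3 x y zs)
  then show ?case by (simp add: add_nonneg_nonneg less_imp_le)
qed auto

lemma is_walk_mono: "is_walk V E p \<Longrightarrow> V \<subseteq> V' \<Longrightarrow> E \<subseteq> E' \<Longrightarrow> is_walk V' E' p"
  unfolding is_walk_def by blast

lemma is_walk_restrict: "is_walk V E p \<Longrightarrow> set p \<subseteq> V' \<Longrightarrow> is_walk V' {e\<in>E. e \<subseteq> V'} p"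
  unfolding is_walk_iff by (auto elim!: successively_mono)

lemma is_walk_rev: "is_walk V E p \<Longrightarrow> is_walk V E (rev p)"
  by (simp add: is_walk_iff insert_commute)

lemma connected_refl: "a \<in> V \<Longrightarrow> connected_in V E a a"
  unfolding connected_in_def by (rule exI[of _ "[a]"]) simp

lemma connected_sym: "connected_in V E a b \<Longrightarrow> connected_in V E b a"
  unfolding connected_in_def
proof (elim exE conjE)
  fix p assume "is_walk V E p" "hd p = a" "last p = b"
  then show "\<exists>p. is_walk V E p \<and> hd p = b \<and> last p = a"
  proof (intro exI[of _ "rev p"] conjI)
    show "is_walk V E (rev p)" using \<open>is_walk V E p\<close> by (rule is_walk_rev)
    have "p \<noteq> []" using \<open>is_walk V E p\<close> by (simp add: is_walk_iff)
    then show "hd (rev p) = b" "last (rev p) = a" using \<open>hd p = a\<close> \<open>last p = b\<close> by (simp_all add: hd_rev last_rev)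
  qed
qed

lemma connected_trans: "connected_in V E a b \<Longrightarrow> connected_in V E b c \<Longrightarrow> connected_in V E a c"
  unfolding connected_in_def
proof (elim exE conjE)
  fix p q assume "is_walk V E p" "hd p = a" "last p = b" "is_walk V E q" "hd q = b" "last q = c"
  then show "\<exists>p. is_walk V E p \<and> hd p = a \<and> last p = c"
  proof (intro exI[of _ "p @ tl q"] conjI)
    show "is_walk V E (p @ tl q)" using is_walk_glue \<open>is_walk V E p\<close> \<open>is_walk V E q\<close> \<open>hd q = b\<close> \<open>last p = b\<close> by metis
    show "hd (p @ tl q) = a" using \<open>is_walk V E p\<close> \<open>hd p = a\<close> by (auto simp: is_walk_iff)
    show "last (p @ tl q) = c"
    proof (cases "tl q = []")
      case True
      have "q \<noteq> []" using \<open>is_walk V E q\<close> by (simp add: is_walk_iff)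
      then have "q = [hd q]" using True by (cases q) auto
      then show ?thesis using True \<open>hd q = b\<close> \<open>last p = b\<close> \<open>last q = c\<close> by (metis append_Nil2 last.simps)
    next
      case False
      then show ?thesis using \<open>last q = c\<close> by (metis last_appendR last_tl)
    qed
  qed
qed

lemma connected_edge: "{a,b} \<in> E \<Longrightarrow> a \<in> V \<Longrightarrow> b \<in> V \<Longrightarrow> connected_in V E a b"
  unfolding connected_in_def by (rule exI[of _ "[a,b]"]) simp

lemma walk_induct: "successively (adj E) p \<Longrightarrow> p \<noteq> [] \<Longrightarrow> P (hd p) \<Longrightarrow>
   (\<And>x y. P x \<Longrightarrow> {x,y} \<in> E \<Longrightarrow> y \<in> set p \<Longrightarrow> P y) \<Longrightarrow> \<forall>y\<in>set p. P y"
proof (induction p rule: induct_list012)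
  case (3 x y zs)
  have "P x" using 3(5) by simp
  have xy: "{x,y} \<in> E" using 3(3) by simp
  have "P y" using 3(6)[OF \<open>P x\<close> xy] by simp
  have "\<forall>z\<in>set (y#zs). P z"
  proof (rule 3(2))
    show "successively (adj E) (y # zs)" using 3(3) by simp
    show "P (hd (y # zs))" using \<open>P y\<close> by simp
    show "\<And>a b. P a \<Longrightarrow> {a, b} \<in> E \<Longrightarrow> b \<in> set (y # zs) \<Longrightarrow> P b" using 3(6) by simp
  qed simp
  then show ?case using \<open>P x\<close> by simp
qed auto

lemma connected_induct: "connected_in V E a b \<Longrightarrow> P a \<Longrightarrow>
   (\<And>x y. P x \<Longrightarrow> {x,y} \<in> E \<Longrightarrow> y \<in> V \<Longrightarrow> P y) \<Longrightarrow> P b"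
  unfolding connected_in_def
proof (elim exE conjE)
  fix p assume a: "is_walk V E p" "hd p = a" "last p = b" "P a"
     "(\<And>x y. P x \<Longrightarrow> {x,y} \<in> E \<Longrightarrow> y \<in> V \<Longrightarrow> P y)"
  have "\<forall>y\<in>set p. P y"
  proof (rule walk_induct[of E p])
    show "successively (adj E) p" "p \<noteq> []" using a(1) by (simp_all add: is_walk_iff)
    show "P (hd p)" using a by simp
    fix x y assume "P x" "{x,y} \<in> E" "y \<in> set p"
    moreover have "y \<in> V" using a(1) \<open>y \<in> set p\<close> by (auto simp: is_walk_iff)
    ultimately show "P y" using a(5) by blast
  qed
  then show "P b" using a by (auto simp: is_walk_iff)
qed

lemma walk_distinct: "is_walk V E p \<Longrightarrow> \<exists>q. is_walk V E q \<and> distinct q \<and> hd q = hd p \<and> last q = last p"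
proof (induction "length p" arbitrary: p rule: less_induct)
  case less
  show ?case
  proof (cases "distinct p")
    case True then show ?thesis using less by blast
  next
    case False
    then obtain xs ys zs y where p: "p = xs@[y]@ys@[y]@zs" using not_distinct_decomp by blast
    let ?q = "xs @ [y] @ zs"
    have s1: "successively (adj E) (xs @ (y # ys) @ (y # zs))" using less(2) unfolding p by (simp add: is_walk_iff)
    then have "successively (adj E) (y # zs)" unfolding successively_append_iff by simp
    then have "is_walk V E ?q" using less(2) s1 unfolding p
      by (auto simp: is_walk_iff successively_append_iff)
    moreover have "hd ?q = hd p" "last ?q = last p" unfolding p by (cases xs; simp)+
    moreover have "length ?q < length p" unfolding p by simp
    ultimately show ?thesis using less(1) by metis
  qed
qed

lemma finite_distinct_walks: "finite V \<Longrightarrow> finite {p. is_walk V E p \<and> distinct p \<and> P p}"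
proof -
  assume f: "finite V"
  have "{p. is_walk V E p \<and> distinct p \<and> P p} \<subseteq> {xs. set xs \<subseteq> V \<and> length xs \<le> card V}"
  proof
    fix p assume "p \<in> {p. is_walk V E p \<and> distinct p \<and> P p}"
    then have "set p \<subseteq> V" "distinct p" by (auto simp: is_walk_iff)
    then have "length p \<le> card V" using card_mono[OF f] distinct_card by metis
    then show "p \<in> {xs. set xs \<subseteq> V \<and> length xs \<le> card V}" using \<open>set p \<subseteq> V\<close> by simp
  qed
  then show ?thesis using finite_lists_length_le[OF f] finite_subset by blast
qed

lemma dist_le: "finite V \<Longrightarrow> is_walk V E p \<Longrightarrow> distinct p \<Longrightarrow> hd p = s \<Longrightarrow> last p = t \<Longrightarrow>
  shortest_dist V E \<omega> s t \<le> walk_cost \<omega> p"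
  unfolding shortest_dist_def
  by (rule Min_le) (auto intro: finite_imageI finite_distinct_walks)

lemma dist_att: "finite V \<Longrightarrow> connected_in V E s t \<Longrightarrow>
  \<exists>p. is_walk V E p \<and> distinct p \<and> hd p = s \<and> last p = t \<and> shortest_dist V E \<omega> s t = walk_cost \<omega> p"
proof -
  assume f: "finite V" and c: "connected_in V E s t"
  let ?S = "{p. is_walk V E p \<and> distinct p \<and> hd p = s \<and> last p = t}"
  have "?S \<noteq> {}" using c walk_distinct unfolding connected_in_def by fastforce
  then have "shortest_dist V E \<omega> s t \<in> walk_cost \<omega> ` ?S"
    unfolding shortest_dist_def
    by (intro Min_in) (auto intro: finite_imageI finite_distinct_walks[OF f])
  then show ?thesis by auto
qed



primrec tr :: "('v list \<Rightarrow> 'v set set \<Rightarrow> 'v) \<Rightarrow> 'v \<Rightarrow> 'v \<Rightarrow> 'v set set \<Rightarrow> nat \<Rightarrow> 'v list" where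
  "tr g s t Eb 0 = [s]"
| "tr g s t Eb (Suc n) = (let p = tr g s t Eb n in if last p = t then p else p @ [g p (revealed Eb p)])"

lemma traj_tr: "traj A G \<omega> s t k Eb n = tr (A G \<omega> s t k) s t Eb n"
  by (induction n) (simp_all add: Let_def)

lemma tr_ne: "tr g s t Eb n \<noteq> [] \<and> hd (tr g s t Eb n) = s"
  by (induction n) (auto simp: Let_def)

lemma tr_nonempty[simp]: "tr g s t Eb n \<noteq> []"
  using tr_ne by fast

lemma tr_hd[simp]: "hd (tr g s t Eb n) = s"
  using tr_ne by fast

lemma tr_prefix: "m \<le> n \<Longrightarrow> \<exists>r. tr g s t Eb n = tr g s t Eb m @ r"
proof (induction n)
  case 0 then show ?case by simp
next
  case (Suc n)
  show ?case
  proof (cases "m = Suc n")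
    case False
    then obtain r where "tr g s t Eb n = tr g s t Eb m @ r" using Suc by fastforce
    then show ?thesis by (auto simp: Let_def)
  qed simp
qed

lemma tr_stat: "last (tr g s t Eb j) = t \<Longrightarrow> j \<le> m \<Longrightarrow> tr g s t Eb m = tr g s t Eb j"
  by (induction m) (auto simp: Let_def le_Suc_eq)

lemma tr_set_bound: "last (tr g s t Eb n) = t \<Longrightarrow> set (tr g s t Eb m) \<subseteq> set (tr g s t Eb n)"
proof (cases "m \<le> n")
  case True
  then show ?thesis using tr_prefix[OF True, of g s t Eb] by auto
next
  case False
  assume "last (tr g s t Eb n) = t"
  then show ?thesis using tr_stat[of g s t Eb n m] False by simp
qed

lemma not_in_bl: "p \<noteq> [] \<Longrightarrow> x \<notin> set (butlast p) \<Longrightarrow> last p \<noteq> x \<Longrightarrow> x \<notin> set p"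
  by (induction p) (auto split: if_splits)

lemma tr_butlast: "t \<notin> set (butlast (tr g s t Eb n))"
proof (induction n)
  case (Suc n)
  let ?p = "tr g s t Eb n"
  have "?p \<noteq> []" by simp
  then have "last ?p \<noteq> t \<Longrightarrow> t \<notin> set ?p" using Suc not_in_bl by metis
  then show ?case using Suc by (auto simp: Let_def)
qed simp

lemma revealed_inter: "revealed Eb p \<inter> E' = revealed (Eb \<inter> E') p"
  unfolding revealed_def by blast

lemma tr_restrict: "(\<And>p R. g p R = g' p (R \<inter> E')) \<Longrightarrow> tr g s t Eb m = tr g' s t (Eb \<inter> E') m"
  by (induction m) (simp_all add: Let_def revealed_inter)

lemma tr_phase1:
  assumes g: "\<And>p R. v \<notin> set p \<Longrightarrow> g p R = g1 p (R \<inter> E1)"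
    and tn: "\<And>m. t \<notin> set (tr g1 s v (Eb \<inter> E1) m)"
  shows "(\<forall>j<m. last (tr g1 s v (Eb \<inter> E1) j) \<noteq> v) \<Longrightarrow> tr g s t Eb m = tr g1 s v (Eb \<inter> E1) m"
proof (induction m)
  case (Suc m)
  let ?p = "tr g1 s v (Eb \<inter> E1) m"
  have eq: "tr g s t Eb m = ?p" using Suc by auto
  have lv: "last ?p \<noteq> v" using Suc(2) by auto
  have ne: "?p \<noteq> []" by simp
  have lt: "last ?p \<noteq> t" using tn[of m] ne last_in_set by metis
  have "v \<notin> set ?p" using tr_butlast[of v g1 s "Eb \<inter> E1" m] lv ne not_in_bl by metis
  then show ?case using eq lv lt g by (simp add: Let_def revealed_inter)
qed simp

lemma tr_phase2:
  assumes g: "\<And>p R. v \<in> set p \<Longrightarrow> g p R = g2 (dropWhile (\<lambda>x. x \<noteq> v) p) (R \<inter> E2)"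
    and P1: "tr g s t Eb n1 = P1" "last P1 = v" "v \<notin> set (butlast P1)" "P1 \<noteq> []"
    and tv: "t \<noteq> v"
    and E2: "\<And>e x. e \<in> E2 \<Longrightarrow> x \<in> set P1 \<Longrightarrow> x \<in> e \<Longrightarrow> x = v"
  shows "tr g s t Eb (n1 + m) = P1 @ tl (tr g2 v t (Eb \<inter> E2) m)"
proof (induction m)
  case 0 then show ?case using P1 by simp
next
  case (Suc m)
  let ?q = "tr g2 v t (Eb \<inter> E2) m"
  have qne: "?q \<noteq> []" and qh: "hd ?q = v" by simp_all
  then have q: "?q = v # tl ?q" by (metis list.collapse)
  have P1e: "P1 = butlast P1 @ [v]" using P1 by (metis append_butlast_last_id)
  let ?P = "P1 @ tl ?q"
  have Peq: "?P = butlast P1 @ ?q" using P1e q by (metis append.assoc append_Cons append_Nil)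
  have lastP: "last ?P = last ?q" using Peq qne by simp
  have vP: "v \<in> set ?P" using Peq q by (metis in_set_conv_decomp)
  have dw: "dropWhile (\<lambda>x. x \<noteq> v) ?P = ?q"
  proof -
    have dw1: "dropWhile (\<lambda>x. x \<noteq> v) (butlast P1 @ ?q) = dropWhile (\<lambda>x. x \<noteq> v) ?q"
      using P1(3) by (intro dropWhile_append2) auto
    have dw2: "dropWhile (\<lambda>x. x \<noteq> v) ?q = ?q" using qh qne by (cases ?q) auto
    show ?thesis using Peq dw1 dw2 by simp
  qed
  have rv: "revealed Eb ?P \<inter> E2 = revealed (Eb \<inter> E2) ?q"
  proof -
    have "\<And>e x. e \<in> E2 \<Longrightarrow> x \<in> set ?P \<Longrightarrow> x \<in> e \<Longrightarrow> \<exists>y\<in>set ?q. y \<in> e"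
    proof -
      fix e x assume a: "e \<in> E2" "x \<in> set ?P" "x \<in> e"
      show "\<exists>y\<in>set ?q. y \<in> e"
      proof (cases "x \<in> set ?q")
        case False
        then have "x \<in> set P1" using a Peq by (metis Un_iff in_set_butlastD set_append)
        then have "x = v" using E2 a by blast
        then show ?thesis using a q by (metis list.set_intros(1))
      qed (use a in blast)
    qed
    then show ?thesis unfolding revealed_def using Peq by auto
  qed
  have "tr g s t Eb (n1 + Suc m) = (if last ?P = t then ?P else ?P @ [g ?P (revealed Eb ?P)])"
    using Suc by (simp add: Let_def)
  also have "\<dots> = P1 @ tl (tr g2 v t (Eb \<inter> E2) (Suc m))"
    using lastP g[OF vP] dw rv qne by (simp add: Let_def)
  finally show ?case .
qed



definition good :: "nat \<Rightarrow> real \<Rightarrow> 'v graph \<Rightarrow> ('v set \<Rightarrow> rat) \<Rightarrow> 'v \<Rightarrow> 'v \<Rightarrow> ('v list \<Rightarrow> 'v set set \<Rightarrow> 'v) \<Rightarrow> bool" where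
  "good k C G \<omega> s t g \<longleftrightarrow> (\<forall>Eb. ctp_instance G \<omega> s t k Eb \<longrightarrow>
     (\<exists>n. last (tr g s t Eb n) = t \<and> is_walk (fst G) (snd G - Eb) (tr g s t Eb n) \<and>
        real_of_rat (walk_cost \<omega> (tr g s t Eb n)) \<le> C * real_of_rat (shortest_dist (fst G) (snd G - Eb) \<omega> s t)))"

lemma conn_mem: "connected_in V E a b \<Longrightarrow> a \<in> V \<and> b \<in> V"
  unfolding connected_in_def is_walk_iff by auto

lemma wf_edge: "wf_graph (V,E) \<Longrightarrow> {x,y} \<in> E \<Longrightarrow> x \<in> V \<and> y \<in> V \<and> x \<noteq> y"
  unfolding wf_graph_def by (auto simp: doubleton_eq_iff)

lemma wf_finE: "wf_graph (V,E) \<Longrightarrow> finite E"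
proof -
  assume w: "wf_graph (V,E)"
  then have "E \<subseteq> Pow V" "finite V" unfolding wf_graph_def by auto
  then show ?thesis by (meson finite_Pow_iff finite_subset)
qed

lemma walk_prefix: "is_walk V E (xs @ ys) \<Longrightarrow> xs \<noteq> [] \<Longrightarrow> is_walk V E xs"
  by (auto simp: is_walk_iff successively_append_iff)

lemma walk_suffix: "is_walk V E (xs @ ys) \<Longrightarrow> ys \<noteq> [] \<Longrightarrow> is_walk V E ys"
  by (auto simp: is_walk_iff successively_append_iff)

lemma glue_last: "xs \<noteq> [] \<Longrightarrow> ys \<noteq> [] \<Longrightarrow> last xs = hd ys \<Longrightarrow> last (xs @ tl ys) = last ys"
  by (cases ys) auto

lemma sub_instance:
  assumes wf: "wf_graph (V,E)" and pos: "\<forall>e\<in>E. \<omega> e > 0" and V': "V' \<subseteq> V"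
    and cg: "connected_graph (V', {e\<in>E. e \<subseteq> V'})" and ab: "a \<noteq> b"
    and gd: "good k C (V', {e\<in>E. e \<subseteq> V'}) \<omega> a b g" and C: "C \<ge> 0"
    and Eb: "Eb \<subseteq> E" "card Eb \<le> k"
    and p: "is_walk V' ({e\<in>E. e \<subseteq> V'} - Eb) p" "distinct p" "hd p = a" "last p = b"
  shows "\<exists>n. last (tr g a b (Eb \<inter> {e\<in>E. e \<subseteq> V'}) n) = b \<and>
     is_walk V' ({e\<in>E. e \<subseteq> V'} - Eb) (tr g a b (Eb \<inter> {e\<in>E. e \<subseteq> V'}) n) \<and>
     real_of_rat (walk_cost \<omega> (tr g a b (Eb \<inter> {e\<in>E. e \<subseteq> V'}) n)) \<le> C * real_of_rat (walk_cost \<omega> p)"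
proof -
  let ?E' = "{e\<in>E. e \<subseteq> V'}"
  let ?Eb = "Eb \<inter> ?E'"
  have eq: "?E' - ?Eb = ?E' - Eb" by blast
  have finV: "finite V" using wf unfolding wf_graph_def by simp
  have finV': "finite V'" using finV V' finite_subset by blast
  have "\<forall>e\<in>?E'. \<exists>u w. u \<noteq> w \<and> u \<in> V' \<and> w \<in> V' \<and> e = {u,w}"
  proof
    fix e assume e: "e \<in> ?E'"
    have wfE: "\<forall>e\<in>E. \<exists>u w. u \<noteq> w \<and> u \<in> V \<and> w \<in> V \<and> e = {u,w}" using wf by (simp add: wf_graph_def)
    have "e \<in> E" using e by simp
    then obtain u w where "u \<noteq> w" "e = {u,w}" using wfE by blast
    then show "\<exists>u w. u \<noteq> w \<and> u \<in> V' \<and> w \<in> V' \<and> e = {u,w}" using e by blast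
  qed
  then have wf': "wf_graph (V', ?E')" using finV' unfolding wf_graph_def by simp
  have ab': "a \<in> V'" "b \<in> V'" using p by (auto simp: is_walk_iff)
  have "length p \<noteq> 1" using p ab by (cases p) auto
  then obtain x y r where pxy: "p = x # y # r" using p(1) unfolding is_walk_iff
    by (metis One_nat_def length_Cons list.exhaust list.size(3))
  then have "{x,y} \<in> ?E' - Eb" using p(1) by simp
  then have strict: "?Eb \<subset> ?E'" by blast
  have "finite Eb" using wf_finE[OF wf] Eb(1) finite_subset by blast
  then have card: "card ?Eb \<le> k" using Eb(2) card_mono[of Eb ?Eb] by simp
  have conn: "connected_in V' (?E' - ?Eb) a b" unfolding connected_in_def eq using p by blast
  have inst: "ctp_instance (V', ?E') \<omega> a b k ?Eb"
    unfolding ctp_instance_def using wf' cg pos ab' strict card conn by auto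
  obtain n where n: "last (tr g a b ?Eb n) = b" "is_walk V' (?E' - ?Eb) (tr g a b ?Eb n)"
    "real_of_rat (walk_cost \<omega> (tr g a b ?Eb n)) \<le> C * real_of_rat (shortest_dist V' (?E' - ?Eb) \<omega> a b)"
    using gd inst unfolding good_def by auto
  have "shortest_dist V' (?E' - ?Eb) \<omega> a b \<le> walk_cost \<omega> p"
    using dist_le[OF finV', of "?E' - ?Eb" p a b \<omega>] p eq by simp
  then have "C * real_of_rat (shortest_dist V' (?E' - ?Eb) \<omega> a b) \<le> C * real_of_rat (walk_cost \<omega> p)"
    using C by (simp add: mult_left_mono of_rat_less_eq)
  then show ?thesis using n eq by (intro exI[of _ n]) auto
qed



locale artic =
  fixes V :: "'v set" and E :: "'v set set" and v :: 'v
  assumes wf: "wf_graph (V,E)" and cg: "connected_graph (V,E)" and vV: "v \<in> V"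
begin

definition R where "R a b \<longleftrightarrow> connected_in (V - {v}) {e\<in>E. v \<notin> e} a b"

lemma R_mem: "R a b \<Longrightarrow> a \<in> V \<and> a \<noteq> v \<and> b \<in> V \<and> b \<noteq> v"
  unfolding R_def using conn_mem by fastforce

lemma R_refl: "a \<in> V \<Longrightarrow> a \<noteq> v \<Longrightarrow> R a a"
  unfolding R_def by (rule connected_refl) simp

lemma R_sym: "R a b \<Longrightarrow> R b a"
  unfolding R_def by (rule connected_sym)

lemma R_trans: "R a b \<Longrightarrow> R b c \<Longrightarrow> R a c"
  unfolding R_def by (rule connected_trans)

lemma R_edge: "{a,b} \<in> E \<Longrightarrow> a \<noteq> v \<Longrightarrow> b \<noteq> v \<Longrightarrow> R a b"
proof -
  assume a: "{a,b} \<in> E" "a \<noteq> v" "b \<noteq> v"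
  then have "a \<in> V" "b \<in> V" using wf_edge[OF wf] by blast+
  then show ?thesis unfolding R_def using a by (intro connected_edge) auto
qed

lemma walk_R: "is_walk V E' q \<Longrightarrow> E' \<subseteq> E \<Longrightarrow> v \<notin> set q \<Longrightarrow> \<forall>y\<in>set q. R (hd q) y"
proof -
  assume q: "is_walk V E' q" "E' \<subseteq> E" "v \<notin> set q"
  have ne: "q \<noteq> []" and sq: "set q \<subseteq> V" and sc: "successively (adj E') q" using q(1) by (auto simp: is_walk_iff)
  have "hd q \<in> set q" using ne by simp
  then have h: "R (hd q) (hd q)" using R_refl sq q(3) by blast
  show ?thesis
  proof (rule walk_induct[OF sc ne])
    show "R (hd q) (hd q)" by (rule h)
    fix x y assume a: "R (hd q) x" "{x,y} \<in> E'" "y \<in> set q"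
    have "x \<noteq> v" using R_mem[OF a(1)] by simp
    moreover have "y \<noteq> v" using a(3) q(3) by blast
    ultimately have "R x y" using R_edge a(2) q(2) by blast
    then show "R (hd q) y" using R_trans[OF a(1)] by blast
  qed
qed

lemma K_sub: "{y. R x y} \<union> {v} \<subseteq> V"
  using R_mem vV by blast

lemma K_conn:
  assumes x: "x \<in> V" "x \<noteq> v"
  shows "connected_graph ({y. R x y} \<union> {v}, {e\<in>E. e \<subseteq> {y. R x y} \<union> {v}})"
proof -
  let ?V = "{y. R x y} \<union> {v}"
  let ?E = "{e\<in>E. e \<subseteq> ?V}"
  have xx: "R x x" using R_refl x by blast
  have A: "connected_in ?V ?E x y" if "R x y" for y
  proof -
    have "R x y \<and> connected_in ?V ?E x y"
    proof (rule connected_induct[of "V - {v}" "{e\<in>E. v \<notin> e}" x y])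
      show "connected_in (V - {v}) {e \<in> E. v \<notin> e} x y" using that unfolding R_def .
      show "R x x \<and> connected_in ?V ?E x x" using xx by (intro conjI connected_refl) auto
      fix a b assume a: "R x a \<and> connected_in ?V ?E x a" "{a,b} \<in> {e \<in> E. v \<notin> e}" "b \<in> V - {v}"
      have "R a b" using a(2) R_edge by auto
      then have "R x b" using R_trans[OF conjunct1[OF a(1)]] by blast
      have aV: "a \<in> ?V" using a(1) by blast
      have bV: "b \<in> ?V" using \<open>R x b\<close> by blast
      have "{a,b} \<in> E" using a(2) by blast
      then have "{a,b} \<in> ?E" using aV bV by blast
      then have "connected_in ?V ?E a b" using aV bV by (rule connected_edge)
      then show "R x b \<and> connected_in ?V ?E x b" using \<open>R x b\<close> connected_trans[OF conjunct2[OF a(1)]] by blast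
    qed
    then show ?thesis by simp
  qed
  have "connected_in V E x v" using cg x vV unfolding connected_graph_def by simp
  then have "R x v \<or> (\<exists>y. R x y \<and> {y,v} \<in> E)"
  proof (rule connected_induct[where P="\<lambda>z. R x z \<or> (\<exists>y. R x y \<and> {y,v} \<in> E)"])
    show "R x x \<or> (\<exists>y. R x y \<and> {y,v} \<in> E)" using xx by blast
    fix a b assume a: "R x a \<or> (\<exists>y. R x y \<and> {y,v} \<in> E)" "{a,b} \<in> E" "b \<in> V"
    show "R x b \<or> (\<exists>y. R x y \<and> {y,v} \<in> E)"
    proof (cases "R x a")
      case True
      show ?thesis
      proof (cases "b = v")
        case True then show ?thesis using \<open>R x a\<close> a(2) by blast
      next
        case False
        have "a \<noteq> v" using R_mem[OF \<open>R x a\<close>] by simp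
        then have "R a b" using R_edge a(2) False by blast
        then show ?thesis using R_trans[OF \<open>R x a\<close>] by blast
      qed
    qed (use a in blast)
  qed
  then obtain y where y: "R x y" "{y,v} \<in> E" using R_mem by blast
  have B: "connected_in ?V ?E x v"
  proof -
    have yV: "y \<in> ?V" "v \<in> ?V" using y by blast+
    have "{y,v} \<in> ?E" using y yV by blast
    then have "connected_in ?V ?E y v" using yV by (rule connected_edge)
    then show ?thesis using connected_trans[OF A[OF y(1)]] by blast
  qed
  have C: "connected_in ?V ?E x z" if "z \<in> ?V" for z using that A B by blast
  show ?thesis unfolding connected_graph_def fst_conv snd_conv
  proof (intro ballI)
    fix u w assume "u \<in> ?V" "w \<in> ?V"
    then show "connected_in ?V ?E u w" using connected_trans[OF connected_sym[OF C] C] by blast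
  qed
qed

lemma K_proper:
  assumes art: "\<not> connected_graph (V - {v}, {e\<in>E. v \<notin> e})" and x: "x \<in> V" "x \<noteq> v"
  shows "{y. R x y} \<union> {v} \<noteq> V"
proof
  assume eq: "{y. R x y} \<union> {v} = V"
  obtain u w where uw: "u \<in> V - {v}" "w \<in> V - {v}" "\<not> R u w"
    using art unfolding connected_graph_def R_def by auto
  have "R x u" "R x w" using uw eq by blast+
  then show False using uw R_trans[OF R_sym] by blast
qed

lemma split_walk:
  assumes p: "is_walk V E' p" "E' \<subseteq> E" "distinct p" "v \<in> set p"
  shows "\<exists>xs ys. p = xs @ v # ys \<and> v \<notin> set xs \<and> v \<notin> set ys \<and>
     (xs \<noteq> [] \<longrightarrow> hd xs = hd p \<and> (\<forall>y\<in>set xs. R (hd p) y)) \<and>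
     (ys \<noteq> [] \<longrightarrow> last ys = last p \<and> (\<forall>y\<in>set ys. R (last p) y))"
proof -
  obtain xs ys where p0: "p = xs @ v # ys" using p(4) split_list by metis
  have d: "v \<notin> set xs" "v \<notin> set ys" using p(3) p0 by auto
  have X: "xs \<noteq> [] \<longrightarrow> hd xs = hd p \<and> (\<forall>y\<in>set xs. R (hd p) y)"
  proof
    assume ne: "xs \<noteq> []"
    have "is_walk V E' xs" using walk_prefix[of V E' xs "v # ys"] p(1) p0 ne by simp
    then have "\<forall>y\<in>set xs. R (hd xs) y" using walk_R p(2) d(1) by blast
    moreover have "hd xs = hd p" using p0 ne by simp
    ultimately show "hd xs = hd p \<and> (\<forall>y\<in>set xs. R (hd p) y)" by simp
  qed
  have Y: "ys \<noteq> [] \<longrightarrow> last ys = last p \<and> (\<forall>y\<in>set ys. R (last p) y)"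
  proof
    assume ne: "ys \<noteq> []"
    have "is_walk V E' ((xs @ [v]) @ ys)" using p(1) p0 by simp
    then have "is_walk V E' ys" using walk_suffix ne by blast
    then have "is_walk V E' (rev ys)" by (rule is_walk_rev)
    then have "\<forall>y\<in>set (rev ys). R (hd (rev ys)) y" using walk_R p(2) d(2) by (metis set_rev)
    moreover have "hd (rev ys) = last ys" using ne by (simp add: hd_rev)
    moreover have "last ys = last p" using p0 ne by simp
    ultimately show "last ys = last p \<and> (\<forall>y\<in>set ys. R (last p) y)" by simp
  qed
  show ?thesis using p0 d X Y by blast
qed

end



context artic
begin

lemma caseA:
  fixes \<omega> :: "'v set \<Rightarrow> rat" and F :: "'v graph set"
  assumes pos: "\<forall>e\<in>E. \<omega> e > 0" and C: "C \<ge> 0" and mono: "monotone_family F" and GF: "(V,E) \<in> F"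
    and art: "\<not> connected_graph (V - {v}, {e\<in>E. v \<notin> e})"
    and x: "x \<in> V" "x \<noteq> v" and s: "s = v \<or> R x s" and t: "t = v \<or> R x t" and st: "s \<noteq> t"
    and IH: "\<And>V' E' a b. V' \<subset> V \<Longrightarrow> (V',E') \<in> F \<Longrightarrow> \<exists>g. good k C (V',E') \<omega> a b g"
  shows "\<exists>g. good k C (V,E) \<omega> s t g"
proof -
  define V' where "V' = {y. R x y} \<union> {v}"
  define E' where "E' = {e\<in>E. e \<subseteq> V'}"
  have V'V: "V' \<subset> V" unfolding V'_def psubset_eq using K_sub[of x] K_proper[OF art x] by simp
  have "(V',E') \<in> F"
    by (rule mono[unfolded monotone_family_def, rule_format, OF GF]) (use V'V in \<open>auto simp: E'_def\<close>)
  then obtain g' where g': "good k C (V',E') \<omega> s t g'" using IH V'V by blast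
  define g where "g = (\<lambda>p RR. g' p (RR \<inter> E'))"
  have cV': "connected_graph (V',E')" using K_conn[OF x] unfolding V'_def E'_def .
  have finV: "finite V" using wf unfolding wf_graph_def by simp
  show ?thesis
  proof (intro exI[of _ g], unfold good_def, intro allI impI)
    fix Eb assume inst: "ctp_instance (V, E) \<omega> s t k Eb"
    then have cst: "connected_in V (E - Eb) s t" and Eb: "Eb \<subseteq> E" "card Eb \<le> k"
      unfolding ctp_instance_def by auto
    obtain p where p: "is_walk V (E - Eb) p" "distinct p" "hd p = s" "last p = t"
      "shortest_dist V (E - Eb) \<omega> s t = walk_cost \<omega> p" using dist_att[OF finV cst] by blast
    have pne: "p \<noteq> []" using p(1) by (simp add: is_walk_iff)
    have EbE: "E - Eb \<subseteq> E" by blast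
    have "set p \<subseteq> V'"
    proof (cases "v \<in> set p")
      case False
      then have "\<forall>y\<in>set p. R s y" using walk_R[OF p(1) EbE] p(3) by simp
      moreover have "s \<noteq> v" using False p(3) pne by (metis hd_in_set)
      then have "R x s" using s by simp
      ultimately show ?thesis using R_trans[OF \<open>R x s\<close>] unfolding V'_def by blast
    next
      case True
      obtain xs ys where sp: "p = xs @ v # ys" "v \<notin> set xs" "v \<notin> set ys"
        "xs \<noteq> [] \<longrightarrow> hd xs = hd p \<and> (\<forall>y\<in>set xs. R (hd p) y)"
        "ys \<noteq> [] \<longrightarrow> last ys = last p \<and> (\<forall>y\<in>set ys. R (last p) y)"
        using split_walk[OF p(1) EbE p(2) True] by blast
      have X: "set xs \<subseteq> V'"
      proof (cases "xs = []")
        case False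
        then have "s \<noteq> v" using sp(2,4) p(3) by (metis hd_in_set)
        then have "R x s" using s by simp
        then show ?thesis using sp(4) False p(3) R_trans[OF \<open>R x s\<close>] unfolding V'_def by blast
      qed simp
      have Y: "set ys \<subseteq> V'"
      proof (cases "ys = []")
        case False
        then have "t \<noteq> v" using sp(3,5) p(4) by (metis last_in_set)
        then have "R x t" using t by simp
        then show ?thesis using sp(5) False p(4) R_trans[OF \<open>R x t\<close>] unfolding V'_def by blast
      qed simp
      show ?thesis using X Y sp(1) unfolding V'_def by auto
    qed
    then have "is_walk V' {e\<in>E - Eb. e \<subseteq> V'} p" using is_walk_restrict[OF p(1)] by blast
    moreover have "{e\<in>E - Eb. e \<subseteq> V'} = {e\<in>E. e \<subseteq> V'} - Eb" by blast
    ultimately have pw: "is_walk V' ({e\<in>E. e \<subseteq> V'} - Eb) p" by simp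
    have g'': "good k C (V', {e\<in>E. e \<subseteq> V'}) \<omega> s t g'" using g' unfolding E'_def .
    obtain n where n: "last (tr g' s t (Eb \<inter> {e\<in>E. e \<subseteq> V'}) n) = t"
      "is_walk V' ({e\<in>E. e \<subseteq> V'} - Eb) (tr g' s t (Eb \<inter> {e\<in>E. e \<subseteq> V'}) n)"
      "real_of_rat (walk_cost \<omega> (tr g' s t (Eb \<inter> {e\<in>E. e \<subseteq> V'}) n)) \<le> C * real_of_rat (walk_cost \<omega> p)"
      using sub_instance[OF wf pos _ _ st g'' C Eb pw p(2-4)] V'V cV' unfolding E'_def by blast
    have tre: "tr g s t Eb n = tr g' s t (Eb \<inter> {e\<in>E. e \<subseteq> V'}) n"
      unfolding g_def E'_def by (rule tr_restrict) simp
    have "is_walk V (E - Eb) (tr g s t Eb n)" unfolding tre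
      by (rule is_walk_mono[OF n(2)]) (use V'V in auto)
    then show "\<exists>n. last (tr g s t Eb n) = t \<and> is_walk (fst (V,E)) (snd (V,E) - Eb) (tr g s t Eb n) \<and>
        real_of_rat (walk_cost \<omega> (tr g s t Eb n)) \<le> C * real_of_rat (shortest_dist (fst (V,E)) (snd (V,E) - Eb) \<omega> s t)"
      using n tre p(5) by (intro exI[of _ n]) simp
  qed
qed


lemma caseB:
  fixes \<omega> :: "'v set \<Rightarrow> rat" and F :: "'v graph set"
  assumes pos: "\<forall>e\<in>E. \<omega> e > 0" and C: "C \<ge> 0" and mono: "monotone_family F" and GF: "(V,E) \<in> F"
    and s: "s \<in> V" "s \<noteq> v" and t: "t \<in> V" "t \<noteq> v" and nst: "\<not> R s t"
    and IH: "\<And>V' E' a b. V' \<subset> V \<Longrightarrow> (V',E') \<in> F \<Longrightarrow> \<exists>g. good k C (V',E') \<omega> a b g"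
  shows "\<exists>g. good k C (V,E) \<omega> s t g"
proof -
  define V1 where "V1 = {y. R s y} \<union> {v}"
  define E1 where "E1 = {e\<in>E. e \<subseteq> V1}"
  define V2 where "V2 = {y. R t y} \<union> {v}"
  define E2 where "E2 = {e\<in>E. e \<subseteq> V2}"
  have tV1: "t \<notin> V1" using nst t unfolding V1_def by simp
  have sV2: "s \<notin> V2" using nst s R_sym unfolding V2_def by blast
  have V1V: "V1 \<subset> V" unfolding V1_def psubset_eq using K_sub[of s] tV1 t unfolding V1_def by blast
  have V2V: "V2 \<subset> V" unfolding V2_def psubset_eq using K_sub[of t] sV2 s unfolding V2_def by blast
  have "(V1,E1) \<in> F"
    by (rule mono[unfolded monotone_family_def, rule_format, OF GF]) (use V1V in \<open>auto simp: E1_def\<close>)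
  then obtain g1 where g1: "good k C (V1,E1) \<omega> s v g1" using IH V1V by blast
  have "(V2,E2) \<in> F"
    by (rule mono[unfolded monotone_family_def, rule_format, OF GF]) (use V2V in \<open>auto simp: E2_def\<close>)
  then obtain g2 where g2: "good k C (V2,E2) \<omega> v t g2" using IH V2V by blast
  have c1: "connected_graph (V1,E1)" using K_conn[OF s] unfolding V1_def E1_def .
  have c2: "connected_graph (V2,E2)" using K_conn[OF t] unfolding V2_def E2_def .
  define g where "g = (\<lambda>p RR. if v \<in> set p then g2 (dropWhile (\<lambda>x. x \<noteq> v) p) (RR \<inter> E2) else g1 p (RR \<inter> E1))"
  have finV: "finite V" using wf unfolding wf_graph_def by simp
  have V12: "V1 \<inter> V2 \<subseteq> {v}"
  proof
    fix y assume y: "y \<in> V1 \<inter> V2"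
    show "y \<in> {v}"
    proof (rule ccontr)
      assume "y \<notin> {v}"
      then have "R s y" "R t y" using y unfolding V1_def V2_def by auto
      then show False using nst R_trans[OF \<open>R s y\<close> R_sym[OF \<open>R t y\<close>]] by simp
    qed
  qed
  show ?thesis
  proof (intro exI[of _ g], unfold good_def, intro allI impI)
    fix Eb assume inst: "ctp_instance (V, E) \<omega> s t k Eb"
    then have cst: "connected_in V (E - Eb) s t" and Eb: "Eb \<subseteq> E" "card Eb \<le> k"
      unfolding ctp_instance_def by auto
    obtain p where p: "is_walk V (E - Eb) p" "distinct p" "hd p = s" "last p = t"
      "shortest_dist V (E - Eb) \<omega> s t = walk_cost \<omega> p" using dist_att[OF finV cst] by blast
    have pne: "p \<noteq> []" using p(1) by (simp add: is_walk_iff)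
    have EbE: "E - Eb \<subseteq> E" by blast
    have vp: "v \<in> set p"
    proof (rule ccontr)
      assume "v \<notin> set p"
      then have "\<forall>y\<in>set p. R s y" using walk_R[OF p(1) EbE] p(3) by simp
      then show False using nst p(4) pne by (metis last_in_set)
    qed
    obtain xs ys where sp: "p = xs @ v # ys" "v \<notin> set xs" "v \<notin> set ys"
        "xs \<noteq> [] \<longrightarrow> hd xs = hd p \<and> (\<forall>y\<in>set xs. R (hd p) y)"
        "ys \<noteq> [] \<longrightarrow> last ys = last p \<and> (\<forall>y\<in>set ys. R (last p) y)"
      using split_walk[OF p(1) EbE p(2) vp] by blast
    have xne: "xs \<noteq> []" using sp(1) p(3) s(2) by (cases xs) auto
    have yne: "ys \<noteq> []" using sp(1) p(4) t(2) by (cases ys) auto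
    define p1 where "p1 = xs @ [v]"
    define p2 where "p2 = v # ys"
    have pp: "p = p1 @ ys" "p = xs @ p2" "p = p1 @ tl p2" using sp(1) unfolding p1_def p2_def by simp_all
    have w1: "is_walk V (E - Eb) p1" using walk_prefix[of V "E - Eb" p1 ys] p(1) pp(1) unfolding p1_def by simp
    have w2: "is_walk V (E - Eb) p2" using walk_suffix[of V "E - Eb" xs p2] p(1) pp(2) unfolding p2_def by simp
    have d1: "distinct p1" "hd p1 = s" "last p1 = v"
      using p(2) sp(1) unfolding p1_def apply simp
      using xne sp(4) p(3) unfolding p1_def apply simp
      unfolding p1_def by simp
    have d2: "distinct p2" "hd p2 = v" "last p2 = t"
      using p(2) sp(1) unfolding p2_def apply simp
      unfolding p2_def apply simp
      using yne sp(5) p(4) by simp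
    have s1: "set p1 \<subseteq> V1" using sp(4) xne p(3) unfolding p1_def V1_def by auto
    have s2: "set p2 \<subseteq> V2" using sp(5) yne p(4) unfolding p2_def V2_def by auto
    have "is_walk V1 {e\<in>E - Eb. e \<subseteq> V1} p1" using is_walk_restrict[OF w1 s1] .
    moreover have "{e\<in>E - Eb. e \<subseteq> V1} = {e\<in>E. e \<subseteq> V1} - Eb" by blast
    ultimately have pw1: "is_walk V1 ({e\<in>E. e \<subseteq> V1} - Eb) p1" by simp
    have "is_walk V2 {e\<in>E - Eb. e \<subseteq> V2} p2" using is_walk_restrict[OF w2 s2] .
    moreover have "{e\<in>E - Eb. e \<subseteq> V2} = {e\<in>E. e \<subseteq> V2} - Eb" by blast
    ultimately have pw2: "is_walk V2 ({e\<in>E. e \<subseteq> V2} - Eb) p2" by simp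
    have g1': "good k C (V1, {e\<in>E. e \<subseteq> V1}) \<omega> s v g1" using g1 unfolding E1_def .
    have g2': "good k C (V2, {e\<in>E. e \<subseteq> V2}) \<omega> v t g2" using g2 unfolding E2_def .
    have c1': "connected_graph (V1, {e\<in>E. e \<subseteq> V1})" using c1 unfolding E1_def .
    have c2': "connected_graph (V2, {e\<in>E. e \<subseteq> V2})" using c2 unfolding E2_def .
    obtain n1' where n1': "last (tr g1 s v (Eb \<inter> E1) n1') = v"
      "is_walk V1 (E1 - Eb) (tr g1 s v (Eb \<inter> E1) n1')"
      "real_of_rat (walk_cost \<omega> (tr g1 s v (Eb \<inter> E1) n1')) \<le> C * real_of_rat (walk_cost \<omega> p1)"
      using sub_instance[OF wf pos _ c1' s(2) g1' C Eb pw1 d1] V1V unfolding E1_def by blast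
    obtain n2 where n2: "last (tr g2 v t (Eb \<inter> E2) n2) = t"
      "is_walk V2 (E2 - Eb) (tr g2 v t (Eb \<inter> E2) n2)"
      "real_of_rat (walk_cost \<omega> (tr g2 v t (Eb \<inter> E2) n2)) \<le> C * real_of_rat (walk_cost \<omega> p2)"
      using sub_instance[OF wf pos _ c2' _ g2' C Eb pw2 d2] V2V t(2) unfolding E2_def by fastforce
    define n1 where "n1 = (LEAST n. last (tr g1 s v (Eb \<inter> E1) n) = v)"
    have n1a: "last (tr g1 s v (Eb \<inter> E1) n1) = v" unfolding n1_def by (rule LeastI[of _ n1'], rule n1'(1))
    have n1b: "n1 \<le> n1'" unfolding n1_def by (rule Least_le, rule n1'(1))
    have n1c: "tr g1 s v (Eb \<inter> E1) n1' = tr g1 s v (Eb \<inter> E1) n1" using tr_stat[OF n1a n1b] .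
    define P1 where "P1 = tr g1 s v (Eb \<inter> E1) n1"
    have P1w: "is_walk V1 (E1 - Eb) P1" using n1'(2) n1c unfolding P1_def by simp
    have P1c: "real_of_rat (walk_cost \<omega> P1) \<le> C * real_of_rat (walk_cost \<omega> p1)" using n1'(3) n1c unfolding P1_def by simp
    have tn: "t \<notin> set (tr g1 s v (Eb \<inter> E1) m)" for m
    proof -
      have "set (tr g1 s v (Eb \<inter> E1) m) \<subseteq> set (tr g1 s v (Eb \<inter> E1) n1')" by (rule tr_set_bound[OF n1'(1)])
      also have "\<dots> \<subseteq> V1" using n1'(2) by (simp add: is_walk_iff)
      finally show ?thesis using tV1 by blast
    qed
    have ph1: "tr g s t Eb n1 = P1" unfolding P1_def
    proof (rule tr_phase1[where ?E1.0=E1])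
      show "\<And>p RR. v \<notin> set p \<Longrightarrow> g p RR = g1 p (RR \<inter> E1)" unfolding g_def by simp
      show "\<And>m. t \<notin> set (tr g1 s v (Eb \<inter> E1) m)" by (rule tn)
      show "\<forall>j<n1. last (tr g1 s v (Eb \<inter> E1) j) \<noteq> v" unfolding n1_def using not_less_Least by blast
    qed
    have P1ne: "P1 \<noteq> []" unfolding P1_def by simp
    have P1b: "v \<notin> set (butlast P1)" unfolding P1_def by (rule tr_butlast)
    have P1l: "last P1 = v" unfolding P1_def by (rule n1a)
    have P1s: "set P1 \<subseteq> V1" using P1w by (simp add: is_walk_iff)
    define Q where "Q = tr g2 v t (Eb \<inter> E2) n2"
    have Qne: "Q \<noteq> []" "hd Q = v" unfolding Q_def by simp_all
    have ph2: "tr g s t Eb (n1 + n2) = P1 @ tl Q" unfolding Q_def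
    proof (rule tr_phase2[where ?E2.0=E2])
      show "\<And>p RR. v \<in> set p \<Longrightarrow> g p RR = g2 (dropWhile (\<lambda>x. x \<noteq> v) p) (RR \<inter> E2)" unfolding g_def by simp
      show "tr g s t Eb n1 = P1" by (rule ph1)
      show "last P1 = v" "v \<notin> set (butlast P1)" "P1 \<noteq> []" by (rule P1l, rule P1b, rule P1ne)
      show "t \<noteq> v" by (rule t(2))
      fix e x assume a: "e \<in> E2" "x \<in> set P1" "x \<in> e"
      have "x \<in> V1" using a(2) P1s by blast
      moreover have "x \<in> V2" using a(1,3) unfolding E2_def by blast
      ultimately show "x = v" using V12 by blast
    qed
    have Qw: "is_walk V2 (E2 - Eb) Q" using n2(2) unfolding Q_def .
    have wP1: "is_walk V (E - Eb) P1" by (rule is_walk_mono[OF P1w]) (use V1V in \<open>auto simp: E1_def\<close>)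
    have wQ: "is_walk V (E - Eb) Q" by (rule is_walk_mono[OF Qw]) (use V2V in \<open>auto simp: E2_def\<close>)
    have last: "last (P1 @ tl Q) = t" using glue_last[OF P1ne Qne(1)] P1l Qne(2) n2(1) unfolding Q_def by simp
    have walk: "is_walk V (E - Eb) (P1 @ tl Q)" using is_walk_glue[OF wP1 wQ] P1l Qne(2) by simp
    have cost: "walk_cost \<omega> (P1 @ tl Q) = walk_cost \<omega> P1 + walk_cost \<omega> Q"
      using walk_cost_glue[OF P1ne Qne(1)] P1l Qne(2) by simp
    have costp: "walk_cost \<omega> p = walk_cost \<omega> p1 + walk_cost \<omega> p2"
      using walk_cost_glue[of p1 p2 \<omega>] pp(3) d1(3) d2(2) unfolding p1_def p2_def by simp
    have Qc: "real_of_rat (walk_cost \<omega> Q) \<le> C * real_of_rat (walk_cost \<omega> p2)" using n2(3) unfolding Q_def .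
    have "real_of_rat (walk_cost \<omega> (P1 @ tl Q)) \<le> C * real_of_rat (walk_cost \<omega> p)"
      using P1c Qc unfolding cost costp of_rat_add by (simp add: distrib_left)
    then show "\<exists>n. last (tr g s t Eb n) = t \<and> is_walk (fst (V,E)) (snd (V,E) - Eb) (tr g s t Eb n) \<and>
        real_of_rat (walk_cost \<omega> (tr g s t Eb n)) \<le> C * real_of_rat (shortest_dist (fst (V,E)) (snd (V,E) - Eb) \<omega> s t)"
      using last walk ph2 p(5) by (intro exI[of _ "n1 + n2"]) simp
  qed
qed

end



lemma main_ind:
  fixes F :: "'v graph set" and C :: real and k :: nat and A :: "'v strategy"
  assumes mono: "monotone_family F" and C1: "C \<ge> 1"
    and hA: "\<forall>G \<omega> s t Eb. ctp_instance G \<omega> s t k Eb \<and> G \<in> F \<and> (\<forall>v. \<not> articulation_point G v)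
           \<longrightarrow> competitive_within A G \<omega> s t k Eb C"
  shows "finite V \<Longrightarrow> (V,E) \<in> F \<Longrightarrow> \<exists>g. good k C (V,E) \<omega> s t g"
proof (induction "card V" arbitrary: V E \<omega> s t rule: less_induct)
  case less
  have C: "C \<ge> 0" using C1 by simp
  have IH: "\<exists>g. good k C (V',E') \<omega>' a b g" if "V' \<subset> V" "(V',E') \<in> F" for V' E' \<omega>' a b
  proof -
    have "card V' < card V" using psubset_card_mono[OF less.prems(1) that(1)] .
    moreover have "finite V'" using that(1) less.prems(1) finite_subset by blast
    ultimately show ?thesis using less.hyps that(2) by blast
  qed
  show ?case
  proof (cases "wf_graph (V,E) \<and> connected_graph (V,E) \<and> (\<forall>e\<in>E. \<omega> e > 0) \<and> s \<in> V \<and> t \<in> V")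
    case False
    then show ?thesis unfolding good_def ctp_instance_def by auto
  next
    case True
    then have wf: "wf_graph (V,E)" and cg: "connected_graph (V,E)" and pos: "\<forall>e\<in>E. \<omega> e > 0"
      and sV: "s \<in> V" and tV: "t \<in> V" by auto
    have finV: "finite V" by (rule less.prems(1))
    show ?thesis
    proof (cases "s = t")
      case True
      show ?thesis
      proof (intro exI[of _ "\<lambda>_ _. s"], unfold good_def, intro allI impI)
        fix Eb assume inst: "ctp_instance (V, E) \<omega> s t k Eb"
        then have cst: "connected_in V (E - Eb) s t" unfolding ctp_instance_def by auto
        obtain p where p: "is_walk V (E - Eb) p"
          "shortest_dist V (E - Eb) \<omega> s t = walk_cost \<omega> p" using dist_att[OF finV cst] by blast
        have "successively (adj (E - Eb)) p" using p(1) by (simp add: is_walk_iff)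
        moreover have "\<forall>e\<in>E - Eb. \<omega> e > 0" using pos by blast
        ultimately have "walk_cost \<omega> p \<ge> 0" by (rule walk_cost_nonneg)
        then have "0 \<le> C * real_of_rat (shortest_dist V (E - Eb) \<omega> s t)" using C p(2) by simp
        then show "\<exists>n. last (tr (\<lambda>_ _. s) s t Eb n) = t \<and> is_walk (fst (V,E)) (snd (V,E) - Eb) (tr (\<lambda>_ _. s) s t Eb n) \<and>
          real_of_rat (walk_cost \<omega> (tr (\<lambda>_ _. s) s t Eb n)) \<le> C * real_of_rat (shortest_dist (fst (V,E)) (snd (V,E) - Eb) \<omega> s t)"
          using True sV by (intro exI[of _ 0]) simp
      qed
    next
      case st: False
      show ?thesis
      proof (cases "\<exists>v. articulation_point (V,E) v")
        case False
        show ?thesis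
        proof (intro exI[of _ "A (V,E) \<omega> s t k"], unfold good_def, intro allI impI)
          fix Eb assume inst: "ctp_instance (V, E) \<omega> s t k Eb"
          then have "competitive_within A (V,E) \<omega> s t k Eb C" using hA less.prems(2) False by blast
          then show "\<exists>n. last (tr (A (V,E) \<omega> s t k) s t Eb n) = t \<and> is_walk (fst (V,E)) (snd (V,E) - Eb) (tr (A (V,E) \<omega> s t k) s t Eb n) \<and>
            real_of_rat (walk_cost \<omega> (tr (A (V,E) \<omega> s t k) s t Eb n)) \<le> C * real_of_rat (shortest_dist (fst (V,E)) (snd (V,E) - Eb) \<omega> s t)"
            unfolding competitive_within_def traj_tr Let_def .
        qed
      next
        case True
        then obtain v where v: "v \<in> V" "\<not> connected_graph (V - {v}, {e\<in>E. v \<notin> e})"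
          unfolding articulation_point_def by auto
        interpret artic V E v using wf cg v(1) by unfold_locales
        show ?thesis
        proof (cases "s = v \<or> t = v \<or> R s t")
          case True
          show ?thesis
          proof (cases "s = v")
            case True
            then have "t \<noteq> v" using st by simp
            then show ?thesis using caseA[OF pos C mono less.prems(2) v(2) tV \<open>t \<noteq> v\<close> _ _ st IH] True R_refl[OF tV] by blast
          next
            case sv: False
            then have "R s s" using R_refl[OF sV] by simp
            have "t = v \<or> R s t" using True sv by simp
            then show ?thesis using caseA[OF pos C mono less.prems(2) v(2) sV sv _ _ st IH] \<open>R s s\<close> by blast
          qed
        next
          case False
          then show ?thesis using caseB[OF pos C mono less.prems(2) sV _ tV _ _ IH] by blast
        qed
      qed
    qed
  qed
qed

theorem mainTheorem4:
  fixes F :: "'v graph set" and C :: real and k :: nat and A :: "'v strategy"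
  assumes "monotone_family F" and "C \<ge> 1"
    and "\<forall>G \<omega> s t Eb. ctp_instance G \<omega> s t k Eb \<and> G \<in> F \<and> (\<forall>v. \<not> articulation_point G v)
           \<longrightarrow> competitive_within A G \<omega> s t k Eb C"
  shows "\<exists>A' :: 'v strategy. \<forall>G \<omega> s t Eb. ctp_instance G \<omega> s t k Eb \<and> G \<in> F
           \<longrightarrow> competitive_within A' G \<omega> s t k Eb C"
proof (intro exI[of _ "\<lambda>G \<omega> s t k'. SOME g. good k C G \<omega> s t g"] allI impI)
  fix G :: "'v graph" and \<omega> s t Eb
  assume a: "ctp_instance G \<omega> s t k Eb \<and> G \<in> F"
  obtain V E where G: "G = (V,E)" by (cases G)
  have "finite V" using a G unfolding ctp_instance_def wf_graph_def by simp
  then have "\<exists>g. good k C G \<omega> s t g" using main_ind[OF assms, of V E \<omega> s t] a G by blast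
  then have "good k C G \<omega> s t (SOME g. good k C G \<omega> s t g)" by (rule someI_ex)
  then show "competitive_within (\<lambda>G \<omega> s t k'. SOME g. good k C G \<omega> s t g) G \<omega> s t k Eb C"
    unfolding competitive_within_def traj_tr Let_def good_def using a by blast
qed

end
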